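(* Let $\mathcal{P}=(\{\mathcal{E}_k:k\in K\},\{M_0,M_1\})$ be a concurrent quantum program on a Hilbert space $\mathcal{H}$ of finite dimension $d$, and let $\rho_0$ be an initial density operator. Then $$\mathcal{H}_{URR}=\operatorname{supp}\Big(\sum_{i=d}^{2d-1}\mathcal{F}^i(\rho_0)\Big),\qquad \mathcal{F}=\sum_{k\in K}\mathcal{F}_k.$$
   Context: $\mathcal{H}$ is a complex Hilbert space of finite dimension $d\ge 1$. A super-operator on $\mathcal{H}$ is a completely positive linear map on operators on $\mathcal{H}$ that does not increase trace of positive operators; trace-preserving if it preserves trace. $\operatorname{supp}(\rho)$ for positive semidefinite $\rho$ is the span of eigenvectors with nonzero eigenvalues. A concurrent quantum program is a pair $\mathcal{P}=(\{\mathcal{E}_k:k\in K\},\{M_0,M_1\})$ with $K=\{1,\dots,m\}$, each $\mathcal{E}_k$ a trace-preserving super-operator on $\mathcal{H}$, and $M_0^\dagger M_0+M_1^\dagger M_1=I$. Define $\mathcal{F}_k(\rho)=\mathcal{E}_k(M_1\rho M_1^\dagger)$; for a finite string $f=s_1\cdots s_n$ over $K$ (length $|f|=n$), $\mathcal{F}_f=\mathcal{F}_{s_n}\circ\cdots\circ\mathcal{F}_{s_1}$. $\mathcal{F}^i$ is the $i$-fold composition. The uniformly repeatedly reachable space is $\mathcal{H}_{URR}=\bigcap_{n\ge0}\bigvee\{\operatorname{supp}\mathcal{F}_f(\rho_0): f\in K^*,\ |f|\ge n\}$, where $\bigvee$ is the span of the union of subspaces. *)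

theory Defs
  imports "HOL-Analysis.Analysis"
begin

text \<open>Operators on the d-dimensional Hilbert space H = complex^'n (d = CARD('n))
  are represented as complex d x d matrices of type complex^'n^'n.\<close>

type_synonym 'n qop = "complex^'n^'n"

definition adj :: "'n::finite qop \<Rightarrow> 'n qop" where
  "adj A = (\<chi> i j. cnj (A $ j $ i))"

definition smul_op :: "complex \<Rightarrow> 'n::finite qop \<Rightarrow> 'n qop" where
  "smul_op c A = (\<chi> i j. c * A $ i $ j)"

definition trace_op :: "'n::finite qop \<Rightarrow> complex" where
  "trace_op A = (\<Sum>i\<in>UNIV. A $ i $ i)"

text \<open>Sesquilinear form  <u, A v>.\<close>
definition sesq :: "complex^'n \<Rightarrow> 'n::finite qop \<Rightarrow> complex^'n \<Rightarrow> complex" where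
  "sesq u A v = (\<Sum>i\<in>UNIV. \<Sum>j\<in>UNIV. cnj (u $ i) * A $ i $ j * v $ j)"

text \<open>Positive semidefinite operator: <v, A v> is real and nonnegative for all v.\<close>
definition psd :: "'n::finite qop \<Rightarrow> bool" where
  "psd A \<longleftrightarrow> (\<forall>v. Im (sesq v A v) = 0 \<and> Re (sesq v A v) \<ge> 0)"

text \<open>Positivity of an m x m block operator with blocks X i j (i,j<m), i.e. an operator
  on C^m \<otimes> H.\<close>
definition block_psd :: "nat \<Rightarrow> (nat \<Rightarrow> nat \<Rightarrow> 'n::finite qop) \<Rightarrow> bool" where
  "block_psd m X \<longleftrightarrow>
     (\<forall>v :: nat \<Rightarrow> complex^'n.
        Im (\<Sum>i<m. \<Sum>j<m. sesq (v i) (X i j) (v j)) = 0 \<and>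
        Re (\<Sum>i<m. \<Sum>j<m. sesq (v i) (X i j) (v j)) \<ge> 0)"

definition clinear_op :: "('n::finite qop \<Rightarrow> 'n qop) \<Rightarrow> bool" where
  "clinear_op \<Phi> \<longleftrightarrow> (\<forall>A B. \<Phi> (A + B) = \<Phi> A + \<Phi> B) \<and> (\<forall>c A. \<Phi> (smul_op c A) = smul_op c (\<Phi> A))"

text \<open>Complete positivity: id_m \<otimes> \<Phi> is positive for every ancilla dimension m.\<close>
definition completely_positive :: "('n::finite qop \<Rightarrow> 'n qop) \<Rightarrow> bool" where
  "completely_positive \<Phi> \<longleftrightarrow>
     (\<forall>m X. block_psd m X \<longrightarrow> block_psd m (\<lambda>i j. \<Phi> (X i j)))"

definition super_operator :: "('n::finite qop \<Rightarrow> 'n qop) \<Rightarrow> bool" where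
  "super_operator \<Phi> \<longleftrightarrow> clinear_op \<Phi> \<and> completely_positive \<Phi> \<and>
     (\<forall>A. psd A \<longrightarrow> Re (trace_op (\<Phi> A)) \<le> Re (trace_op A))"

definition trace_preserving :: "('n::finite qop \<Rightarrow> 'n qop) \<Rightarrow> bool" where
  "trace_preserving \<Phi> \<longleftrightarrow> (\<forall>A. trace_op (\<Phi> A) = trace_op A)"

definition density_op :: "'n::finite qop \<Rightarrow> bool" where
  "density_op \<rho> \<longleftrightarrow> psd \<rho> \<and> trace_op \<rho> = 1"

text \<open>Support: span of the eigenvectors with nonzero eigenvalues.\<close>
definition supp :: "'n::finite qop \<Rightarrow> (complex^'n) set" where
  "supp A = span {v. \<exists>c. c \<noteq> 0 \<and> A *v v = c *s v}"

text \<open>Concurrent quantum program with K = {1..m}: E k for k in K, measurement {M0, M1}.\<close>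
definition concurrent_program ::
  "nat \<Rightarrow> (nat \<Rightarrow> 'n::finite qop \<Rightarrow> 'n qop) \<Rightarrow> 'n qop \<Rightarrow> 'n qop \<Rightarrow> bool" where
  "concurrent_program m E M0 M1 \<longleftrightarrow>
     (\<forall>k\<in>{1..m}. super_operator (E k) \<and> trace_preserving (E k)) \<and>
     adj M0 ** M0 + adj M1 ** M1 = mat 1"

definition Fk :: "(nat \<Rightarrow> 'n::finite qop \<Rightarrow> 'n qop) \<Rightarrow> 'n qop \<Rightarrow> nat \<Rightarrow> 'n qop \<Rightarrow> 'n qop" where
  "Fk E M1 k \<rho> = E k (M1 ** \<rho> ** adj M1)"

text \<open>F_f = F_{s_n} o ... o F_{s_1} for f = s_1 ... s_n.\<close>
definition Fstr :: "(nat \<Rightarrow> 'n::finite qop \<Rightarrow> 'n qop) \<Rightarrow> 'n qop \<Rightarrow> nat list \<Rightarrow> 'n qop \<Rightarrow> 'n qop" where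
  "Fstr E M1 f = fold (Fk E M1) f"

definition Fsum :: "nat \<Rightarrow> (nat \<Rightarrow> 'n::finite qop \<Rightarrow> 'n qop) \<Rightarrow> 'n qop \<Rightarrow> 'n qop \<Rightarrow> 'n qop" where
  "Fsum m E M1 \<rho> = (\<Sum>k\<in>{1..m}. Fk E M1 k \<rho>)"

definition H_URR :: "nat \<Rightarrow> (nat \<Rightarrow> 'n::finite qop \<Rightarrow> 'n qop) \<Rightarrow> 'n qop \<Rightarrow> 'n qop \<Rightarrow> (complex^'n) set" where
  "H_URR m E M1 \<rho>0 =
     (\<Inter>n. span (\<Union>{supp (Fstr E M1 f \<rho>0) | f. set f \<subseteq> {1..m} \<and> length f \<ge> n}))"

end

theory Submission
  imports Defs "HOL-Computational_Algebra.Fundamental_Theorem_Algebra"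
begin

definition ip :: "complex^'n::finite \<Rightarrow> complex^'n \<Rightarrow> complex" where
  "ip u v = (\<Sum>i\<in>UNIV. cnj (u $ i) * v $ i)"

lemma sesq_ip: "sesq u A v = ip u (A *v v)"
  unfolding sesq_def ip_def matrix_vector_mult_def
  by (simp add: sum_distrib_left mult.assoc)

lemma ip_add_left: "ip (u + w) v = ip u v + ip w v"
  unfolding ip_def by (simp add: distrib_right sum.distrib)
lemma ip_add_right: "ip u (v + w) = ip u v + ip u w"
  unfolding ip_def by (simp add: distrib_left sum.distrib)
lemma ip_diff_left: "ip (u - w) v = ip u v - ip w v"
  unfolding ip_def by (simp add: left_diff_distrib sum_subtractf)
lemma ip_diff_right: "ip u (v - w) = ip u v - ip u w"
  unfolding ip_def by (simp add: right_diff_distrib sum_subtractf)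
lemma ip_smult_left: "ip (c *s u) v = cnj c * ip u v"
  unfolding ip_def by (simp add: sum_distrib_left mult.assoc)
lemma ip_smult_right: "ip u (c *s v) = c * ip u v"
  unfolding ip_def by (simp add: sum_distrib_left mult.left_commute)
lemma scaleR_smult: "r *\<^sub>R (u::complex^'n::finite) = of_real r *s u"
  unfolding vec_eq_iff vector_scaleR_component vector_smult_component by (simp add: scaleR_conv_of_real)
lemma ip_scaleR_left: "ip (r *\<^sub>R u) v = of_real r * ip u v"
  by (simp add: scaleR_smult ip_smult_left)
lemma ip_scaleR_right: "ip u (r *\<^sub>R v) = of_real r * ip u v"
  by (simp add: scaleR_smult ip_smult_right)
lemma ip_zero_left[simp]: "ip 0 v = 0" unfolding ip_def by simp
lemma ip_zero_right[simp]: "ip u 0 = 0" unfolding ip_def by simp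
lemma ip_cnj: "cnj (ip u v) = ip v u"
  unfolding ip_def by (simp add: mult.commute)
lemma ip_neg_left: "ip (- u) v = - ip u v" unfolding ip_def by (simp add: sum_negf)
lemma ip_sum_left: "ip (\<Sum>i\<in>I. f i) v = (\<Sum>i\<in>I. ip (f i) v)"
  by (induct I rule: infinite_finite_induct) (auto simp: ip_add_left)

lemma inner_ip: "inner u (v::complex^'n::finite) = Re (ip u v)"
  unfolding ip_def inner_vec_def inner_complex_def by (simp add: Re_sum)

lemma ip_self: "ip v v = of_real (inner v v)"
proof -
  have "Im (ip v v) = 0" unfolding ip_def by (simp add: Im_sum)
  then show ?thesis by (simp add: inner_ip complex_eq_iff)
qed

lemma ip_self_eq0: "ip v v = 0 \<longleftrightarrow> v = 0"
  by (simp add: ip_self)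


lemma sesq_add_left: "sesq (u + w) A v = sesq u A v + sesq w A v"
  by (simp add: sesq_ip ip_add_left)
lemma sesq_add_right: "sesq u A (v + w) = sesq u A v + sesq u A w"
  by (simp add: sesq_ip ip_add_right matrix_vector_right_distrib)
lemma mv_smult: "A *v (c *s v) = c *s (A *v (v::complex^'n::finite))"
  by (simp add: matrix_vector_mult_def vec_eq_iff sum_distrib_left mult.left_commute)
lemma sesq_smult_left: "sesq (c *s u) A v = cnj c * sesq u A v"
  by (simp add: sesq_ip ip_smult_left)
lemma sesq_smult_right: "sesq u A (c *s v) = c * sesq u A v"
  by (simp add: sesq_ip ip_smult_right mv_smult)

lemma psd_herm:
  assumes "psd A"
  shows "sesq v A u = cnj (sesq u A v)"
proof -
  have im: "\<And>x. Im (sesq x A x) = 0" using assms unfolding psd_def by auto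
  have e1: "sesq (u+v) A (u+v) = sesq u A u + sesq u A v + sesq v A u + sesq v A v"
    by (simp add: sesq_add_left sesq_add_right)
  have e2: "sesq (\<i> *s u + v) A (\<i> *s u + v) = sesq u A u - \<i> * sesq u A v + \<i> * sesq v A u + sesq v A v"
    apply (simp only: sesq_add_left sesq_add_right sesq_smult_left sesq_smult_right)
    apply (simp only: complex_cnj_i)
    by (simp add: ring_distribs mult.assoc[symmetric])
  have a: "Im (sesq u A v + sesq v A u) = 0"
    using im[of "u+v"] im[of u] im[of v] e1 by simp
  have b: "Re (sesq v A u) = Re (sesq u A v)"
    using im[of "\<i> *s u + v"] im[of u] im[of v] e2 by simp
  show ?thesis using a b by (simp add: complex_eq_iff)
qed

lemma psd_herm_ip: "psd A \<Longrightarrow> ip u (A *v v) = ip (A *v u) v"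
  using psd_herm[of A u v] by (simp add: sesq_ip ip_cnj)

lemma psd_re: "psd A \<Longrightarrow> sesq v A v = of_real (Re (sesq v A v))"
  unfolding psd_def by (simp add: complex_eq_iff)

lemma quad_nonneg_lin0:
  fixes a b :: real
  assumes "\<And>t. 0 \<le> 2 * t * a + t^2 * b"
  shows "a = 0"
proof (rule ccontr)
  assume an: "a \<noteq> 0"
  have b0: "0 \<le> b" using assms[of 1] assms[of "-1"] by simp
  define c where "c = 1 / (b + 1)"
  have s0: "0 < c" unfolding c_def using b0 by simp
  have sb: "c * b < 1" unfolding c_def using b0 by (simp add: field_simps)
  have eq: "2 * (-a*c) * a + (-a*c)^2 * b = a^2 * c * (c*b - 2)"
    by (simp add: power2_eq_square algebra_simps)
  have "a^2 * c > 0" using an s0 by simp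
  moreover have "c*b - 2 < 0" using sb by simp
  ultimately have "a^2 * c * (c*b - 2) < 0" by (rule mult_pos_neg)
  with assms[of "-a*c"] eq show False by simp
qed

lemma psd_zero_quad:
  assumes "psd A" "sesq v A v = 0"
  shows "A *v v = 0"
proof -
  have q: "\<And>x. 0 \<le> Re (sesq x A x)" using assms(1) unfolding psd_def by auto
  have h: "\<And>x y. sesq y A x = cnj (sesq x A y)" using psd_herm[OF assms(1)] by blast
  have re0: "Re (sesq w A v) = 0" for w
  proof -
    have exp: "sesq (v + of_real r *s w) A (v + of_real r *s w) =
       of_real r * (sesq v A w + sesq w A v) + of_real r * of_real r * sesq w A w" for r
      apply (simp only: sesq_add_left sesq_add_right sesq_smult_left sesq_smult_right complex_cnj_complex_of_real assms(2))
      by (simp add: ring_distribs mult.assoc)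
    have "Re (sesq v A w + sesq w A v) = 2 * Re (sesq w A v)"
      using h[of w v] by simp
    hence "0 \<le> 2 * r * Re (sesq w A v) + r^2 * Re (sesq w A w)" for r
      using q[of "v + of_real r *s w"] exp[of r] by (simp add: power2_eq_square)
    thus ?thesis by (rule quad_nonneg_lin0)
  qed
  have key: "sesq u A v = 0" for u
  proof -
    have "Re (sesq u A v) = 0" by (rule re0)
    moreover have "Re (sesq (\<i> *s u) A v) = 0" by (rule re0)
    ultimately show ?thesis by (simp add: sesq_smult_left complex_eq_iff)
  qed
  have "ip (A *v v) (A *v v) = 0" using key[of "A *v v"] by (simp add: sesq_ip)
  thus ?thesis by (simp add: ip_self_eq0)
qed



definition itv :: "'n::finite qop \<Rightarrow> nat \<Rightarrow> complex^'n \<Rightarrow> complex^'n" where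
  "itv A i v = ((\<lambda>x. A *v x) ^^ i) v"

lemma itv_0[simp]: "itv A 0 v = v" by (simp add: itv_def)
lemma itv_Suc: "itv A (Suc i) v = A *v itv A i v" by (simp add: itv_def)
lemma itv_Suc': "itv A (Suc i) v = itv A i (A *v v)" by (simp add: itv_def funpow_Suc_right del: funpow.simps)

definition pact :: "'n::finite qop \<Rightarrow> complex poly \<Rightarrow> complex^'n \<Rightarrow> complex^'n" where
  "pact A p w = (\<Sum>i\<le>degree p. coeff p i *s itv A i w)"

lemma pact_bound:
  assumes "degree p \<le> N"
  shows "pact A p w = (\<Sum>i\<le>N. coeff p i *s itv A i w)"
  unfolding pact_def
  by (rule sum.mono_neutral_left) (use assms in \<open>auto simp: coeff_eq_0\<close>)

lemma mv_sum: "A *v (\<Sum>i\<in>I. f i) = (\<Sum>i\<in>I. A *v f i)"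
  by (induct I rule: infinite_finite_induct) (auto simp: matrix_vector_right_distrib)

lemma smult_sum: "c *s (\<Sum>i\<in>I. f i) = (\<Sum>i\<in>I. c *s (f i :: complex^'n::finite))"
  by (induct I rule: infinite_finite_induct) (auto simp: vector_add_ldistrib)

lemma pact_shift: "pact A q (A *v w) = A *v pact A q w"
  unfolding pact_def by (simp add: mv_sum mv_smult itv_Suc'[symmetric] itv_Suc)

lemma pact_lin: "pact A ([:-l, 1:] * q) w = A *v pact A q w - l *s pact A q w"
proof -
  define N where "N = Suc (degree q)"
  have deg: "degree ([:-l, 1:] * q) \<le> N"
    unfolding N_def by (rule order.trans[OF degree_mult_le]) simp
  have c: "coeff ([:-l, 1:] * q) i = - l * coeff q i + coeff (pCons 0 q) i" for i
    by simp
  have "pact A ([:-l, 1:] * q) w = (\<Sum>i\<le>N. (- l * coeff q i) *s itv A i w) + (\<Sum>i\<le>N. coeff (pCons 0 q) i *s itv A i w)"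
    unfolding pact_bound[OF deg] c by (simp add: vector_sadd_rdistrib sum.distrib[symmetric])
  also have "(\<Sum>i\<le>N. (- l * coeff q i) *s itv A i w) = - l *s pact A q w"
    using pact_bound[of q N A w] unfolding N_def
    by (simp add: smult_sum vector_smult_assoc)
  also have "(\<Sum>i\<le>N. coeff (pCons 0 q) i *s itv A i w) = A *v pact A q w"
    unfolding N_def sum.atMost_Suc_shift pact_def
    by (simp add: mv_sum mv_smult itv_Suc)
  finally show ?thesis by (simp add: vector_smult_lneg)
qed

lemma real_dep:
  fixes f :: "nat \<Rightarrow> 'a::euclidean_space"
  shows "\<exists>c. (\<exists>i\<le>DIM('a). c i \<noteq> 0) \<and> (\<Sum>i\<le>DIM('a). c i *\<^sub>R f i) = 0"
proof (cases "inj_on f {..DIM('a)}")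
  case True
  let ?X = "f ` {..DIM('a)}"
  have cX: "card ?X = Suc DIM('a)" using True by (simp add: card_image)
  have "\<not> independent ?X"
    using independent_bound[of ?X] cX by auto
  then obtain u where u: "\<exists>v\<in>?X. u v \<noteq> 0" "(\<Sum>v\<in>?X. u v *\<^sub>R v) = 0"
    using dependent_finite[of ?X] by auto
  have "(\<Sum>i\<le>DIM('a). u (f i) *\<^sub>R f i) = 0"
    using u(2) sum.reindex[OF True, of "\<lambda>v. u v *\<^sub>R v"] by simp
  moreover have "\<exists>i\<le>DIM('a). u (f i) \<noteq> 0" using u(1) by auto
  ultimately show ?thesis by (intro exI[of _ "u \<circ> f"]) auto
next
  case False
  then obtain i j where ij: "i \<le> DIM('a)" "j \<le> DIM('a)" "i \<noteq> j" "f i = f j"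
    unfolding inj_on_def by auto
  define c where "c k = (if k = i then 1 else if k = j then -1 else (0::real))" for k
  have "c k *\<^sub>R f k = (if k = i then f i else 0) - (if k = j then f j else 0)" for k
    using ij(3) unfolding c_def by auto
  hence "(\<Sum>k\<le>DIM('a). c k *\<^sub>R f k) = f i - f j"
    using ij by (simp add: sum_subtractf)
  moreover have "c i \<noteq> 0" unfolding c_def by simp
  ultimately show ?thesis using ij by (intro exI[of _ c]) auto
qed

lemma krylov_poly: "\<exists>p. p \<noteq> 0 \<and> pact A p w = 0"
proof -
  obtain c where c: "\<exists>i\<le>DIM(complex^'a). c i \<noteq> 0" "(\<Sum>i\<le>DIM(complex^'a). c i *\<^sub>R itv A i w) = 0"
    using real_dep[of "\<lambda>i. itv A i (w::complex^'a::finite)"] by blast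
  define D where "D = DIM(complex^'a)"
  define p where "p = (\<Sum>i\<le>D. monom (complex_of_real (c i)) i)"
  have cp: "coeff p k = (if k \<le> D then complex_of_real (c k) else 0)" for k
    unfolding p_def coeff_sum by (simp add: sum.delta)
  have deg: "degree p \<le> D" by (rule degree_le) (simp add: cp)
  have "p \<noteq> 0"
  proof
    assume "p = 0"
    hence "\<forall>k. coeff p k = 0" by simp
    moreover obtain i where "i \<le> D" "c i \<noteq> 0" using c(1) unfolding D_def by blast
    ultimately show False using cp[of i] by simp
  qed
  moreover have "pact A p w = 0"
    unfolding pact_bound[OF deg] using c(2) unfolding D_def[symmetric]
    by (simp add: cp scaleR_smult)
  ultimately show ?thesis by blast
qed

definition csub :: "(complex^'n::finite) set \<Rightarrow> bool" where
  "csub U \<longleftrightarrow> subspace U \<and> (\<forall>c v. v \<in> U \<longrightarrow> c *s v \<in> U)"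

lemma itv_in: "csub W \<Longrightarrow> (\<forall>x\<in>W. A *v x \<in> W) \<Longrightarrow> w \<in> W \<Longrightarrow> itv A i w \<in> W"
  by (induct i) (auto simp: itv_Suc)

lemma pact_in:
  assumes "csub W" "\<forall>x\<in>W. A *v x \<in> W" "w \<in> W"
  shows "pact A p w \<in> W"
  unfolding pact_def
proof (rule subspace_sum)
  show "subspace W" using assms(1) unfolding csub_def by auto
  fix i show "coeff p i *s itv A i w \<in> W"
    using assms itv_in[OF assms] unfolding csub_def by blast
qed

lemma eig_from_poly:
  assumes "csub W" "\<forall>x\<in>W. A *v x \<in> W"
  shows "p \<noteq> 0 \<Longrightarrow> pact A p w = 0 \<Longrightarrow> w \<in> W \<Longrightarrow> (\<forall>j. itv A j w \<noteq> 0) \<Longrightarrow>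
     \<exists>l u. l \<noteq> 0 \<and> u \<noteq> 0 \<and> A *v u = l *s u \<and> u \<in> W"
proof (induct "degree p" arbitrary: p w rule: less_induct)
  case less
  show ?case
  proof (cases "degree p = 0")
    case True
    then obtain a where pa: "p = [:a:]" by (metis degree_eq_zeroE)
    have "a \<noteq> 0" using less.prems(1) pa by simp
    moreover have "pact A p w = a *s w" unfolding pact_def pa by simp
    moreover have "w \<noteq> 0" using less.prems(4) by (metis itv_0)
    ultimately show ?thesis using less.prems(2)
      by (metis vector_mul_eq_0)
  next
    case False
    then obtain l where "poly p l = 0"
      using fundamental_theorem_of_algebra[of p] constant_degree[of p] by auto
    then obtain q where pq: "p = [:-l, 1:] * q" using poly_eq_0_iff_dvd by (metis dvdE)
    have q0: "q \<noteq> 0" using less.prems(1) pq by auto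
    have "degree p = degree [:-l, 1:] + degree q" unfolding pq
      by (rule degree_mult_eq) (use q0 in auto)
    hence dq: "degree q < degree p" by simp
    show ?thesis
    proof (cases "l = 0")
      case True
      have "pact A q (A *v w) = 0"
        using less.prems(2) unfolding pq True pact_lin pact_shift by simp
      moreover have "A *v w \<in> W" using assms less.prems(3) by auto
      moreover have "\<forall>j. itv A j (A *v w) \<noteq> 0"
        using less.prems(4) by (metis itv_Suc')
      ultimately show ?thesis using less.hyps[OF dq q0] by blast
    next
      case l: False
      show ?thesis
      proof (cases "pact A q w = 0")
        case True
        thus ?thesis using less.hyps[OF dq q0 True less.prems(3) less.prems(4)] by blast
      next
        case False
        have "A *v pact A q w = l *s pact A q w"
          using less.prems(2) unfolding pq pact_lin by simp
        moreover have "pact A q w \<in> W" using pact_in[OF assms less.prems(3)] .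
        ultimately show ?thesis using l False by blast
      qed
    qed
  qed
qed

lemma psd_itv_nz:
  assumes "psd A" "A *v w \<noteq> 0"
  shows "itv A j w \<noteq> 0"
proof -
  have "itv A (Suc j) w \<noteq> 0" for j
  proof (induct j)
    case 0 thus ?case using assms by (simp add: itv_Suc)
  next
    case (Suc j)
    show ?case
    proof
      assume h: "itv A (Suc (Suc j)) w = 0"
      have "ip (itv A (Suc j) w) (itv A (Suc j) w) = ip (itv A j w) (A *v itv A (Suc j) w)"
        using psd_herm_ip[OF assms(1), of "itv A j w" "itv A (Suc j) w"] by (simp add: itv_Suc)
      also have "\<dots> = 0" using h by (simp add: itv_Suc)
      finally show False using Suc by (simp add: ip_self_eq0)
    qed
  qed
  moreover have "w \<noteq> 0" using assms(2) by auto
  ultimately show ?thesis by (cases j) auto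
qed

lemma eig_in_inv:
  assumes "psd A" "csub W" "\<forall>x\<in>W. A *v x \<in> W" "w \<in> W" "A *v w \<noteq> 0"
  shows "\<exists>l u. l \<noteq> 0 \<and> u \<noteq> 0 \<and> A *v u = l *s u \<and> u \<in> W"
proof -
  obtain p where "p \<noteq> 0" "pact A p w = 0" using krylov_poly by blast
  thus ?thesis using eig_from_poly[OF assms(2,3)] assms(4) psd_itv_nz[OF assms(1,5)] by blast
qed



definition kerA :: "'n::finite qop \<Rightarrow> (complex^'n) set" where
  "kerA A = {v. A *v v = 0}"

definition orthc :: "(complex^'n::finite) set \<Rightarrow> (complex^'n) set" where
  "orthc S = {v. \<forall>k\<in>S. inner k v = 0}"

lemma smult_scaleR_comm: "c *s (r *\<^sub>R (x::complex^'n::finite)) = r *\<^sub>R (c *s x)"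
  by (simp add: scaleR_smult vector_smult_assoc mult.commute)

lemma smult_add: "c *s (x + y) = c *s x + c *s (y::complex^'n::finite)"
  by (rule vector_add_ldistrib)

lemma csub_span:
  assumes "\<And>c v. v \<in> S \<Longrightarrow> c *s v \<in> span S"
  shows "csub (span (S::(complex^'n::finite) set))"
  unfolding csub_def
proof (intro conjI allI impI)
  show "subspace (span S)" by simp
  fix c v assume "v \<in> span S"
  thus "c *s v \<in> span S"
  proof (induct rule: span_induct_alt)
    case base thus ?case by (simp add: span_zero)
  next
    case (step r x y)
    have "c *s (r *\<^sub>R x + y) = r *\<^sub>R (c *s x) + c *s y"
      by (simp add: smult_add smult_scaleR_comm)
    thus ?case using step assms by (simp add: span_add span_scale)
  qed
qed

lemma subspace_orthc: "subspace (orthc S)"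
  unfolding subspace_def orthc_def by (auto simp: inner_add_right)

lemma orth_cplx:
  assumes "v \<in> orthc S" "k \<in> S" "\<i> *s k \<in> S"
  shows "ip k v = 0"
proof -
  have "Re (ip k v) = 0" using assms(1,2) unfolding orthc_def by (simp add: inner_ip)
  moreover have "Re (ip (\<i> *s k) v) = 0" using assms(1,3) unfolding orthc_def by (simp add: inner_ip)
  ultimately show ?thesis by (simp add: ip_smult_left complex_eq_iff)
qed

lemma orthc_span: "orthc S = orthc (span S)"
proof
  show "orthc (span S) \<subseteq> orthc S" unfolding orthc_def using span_superset by blast
  show "orthc S \<subseteq> orthc (span S)"
  proof
    fix v assume v: "v \<in> orthc S"
    { fix a assume "a \<in> span S"
      hence "inner a v = 0"
      proof (induct rule: span_induct_alt)
        case base thus ?case by simp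
      next
        case (step c x y) thus ?case using v unfolding orthc_def by (simp add: inner_add_left)
      qed }
    thus "v \<in> orthc (span S)" unfolding orthc_def by blast
  qed
qed

definition eigs :: "'n::finite qop \<Rightarrow> (complex^'n) set" where
  "eigs A = {v. \<exists>c. c \<noteq> 0 \<and> A *v v = c *s v}"

lemma supp_eigs: "supp A = span (eigs A)" unfolding supp_def eigs_def ..

lemma eigs_smult: "v \<in> eigs A \<Longrightarrow> c *s v \<in> span (eigs A)"
proof (cases "c = 0")
  case True thus ?thesis by (simp add: span_zero)
next
  case False
  assume "v \<in> eigs A"
  then obtain d where "d \<noteq> 0" "A *v v = d *s v" unfolding eigs_def by blast
  hence "A *v (c *s v) = d *s (c *s v)" by (simp add: mv_smult vector_smult_assoc mult.commute)
  hence "c *s v \<in> eigs A" using \<open>d \<noteq> 0\<close> unfolding eigs_def by blast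
  thus ?thesis by (rule span_base)
qed

lemma csub_supp: "csub (supp A)"
  unfolding supp_eigs by (rule csub_span) (rule eigs_smult)

lemma eigs_ii: "v \<in> eigs A \<Longrightarrow> \<i> *s v \<in> eigs A"
  unfolding eigs_def by (auto simp: mv_smult vector_smult_assoc mult.commute)

lemma supp_char:
  assumes "psd A"
  shows "supp A = orthc (kerA A)"
proof
  have "eigs A \<subseteq> orthc (kerA A)"
  proof
    fix v assume "v \<in> eigs A"
    then obtain c where c: "c \<noteq> 0" "A *v v = c *s v" unfolding eigs_def by blast
    { fix k assume "k \<in> kerA A"
      hence "ip k (A *v v) = 0" using psd_herm_ip[OF assms, of k v] unfolding kerA_def by simp
      hence "ip k v = 0" using c by (simp add: ip_smult_right)
      hence "inner k v = 0" by (simp add: inner_ip) }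
    thus "v \<in> orthc (kerA A)" unfolding orthc_def by blast
  qed
  thus "supp A \<subseteq> orthc (kerA A)" unfolding supp_eigs
    by (rule span_minimal) (rule subspace_orthc)
next
  show "orthc (kerA A) \<subseteq> supp A"
  proof
    fix v assume v: "v \<in> orthc (kerA A)"
    obtain y z where yz: "y \<in> span (supp A)" "\<And>w. w \<in> span (supp A) \<Longrightarrow> orthogonal z w" "v = y + z"
      using orthogonal_subspace_decomp_exists[of "supp A" v] by blast
    have sS: "span (supp A) = supp A" unfolding supp_eigs by simp
    show "v \<in> supp A"
    proof (cases "z = 0")
      case True thus ?thesis using yz sS by simp
    next
      case False
      let ?W = "orthc (eigs A)"
      have zW: "z \<in> ?W"
        using yz(2) span_superset[of "eigs A"] unfolding orthc_def sS supp_eigs orthogonal_def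
        by (auto simp: inner_commute span_span)
      have "supp A \<subseteq> orthc (kerA A)"
      proof -
        have "eigs A \<subseteq> orthc (kerA A)"
        proof
          fix u assume "u \<in> eigs A"
          then obtain c where c: "c \<noteq> 0" "A *v u = c *s u" unfolding eigs_def by blast
          { fix k assume "k \<in> kerA A"
            hence "ip k (A *v u) = 0" using psd_herm_ip[OF assms, of k u] unfolding kerA_def by simp
            hence "ip k u = 0" using c by (simp add: ip_smult_right)
            hence "inner k u = 0" by (simp add: inner_ip) }
          thus "u \<in> orthc (kerA A)" unfolding orthc_def by blast
        qed
        thus ?thesis unfolding supp_eigs by (rule span_minimal) (rule subspace_orthc)
      qed
      hence "y \<in> orthc (kerA A)" using yz(1) sS by auto
      hence zK: "z \<in> orthc (kerA A)"
        using v yz(3) subspace_orthc[of "kerA A"] by (metis add_diff_cancel_left' subspace_diff)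
      have Az: "A *v z \<noteq> 0"
      proof
        assume "A *v z = 0"
        hence "z \<in> kerA A" unfolding kerA_def by simp
        hence "inner z z = 0" using zK unfolding orthc_def by blast
        thus False using False by simp
      qed
      have cW: "csub ?W"
        unfolding csub_def
      proof (intro conjI allI impI)
        show "subspace ?W" by (rule subspace_orthc)
        fix c x assume x: "x \<in> ?W"
        { fix k assume k: "k \<in> eigs A"
          have "ip k x = 0" using orth_cplx[OF x k eigs_ii[OF k]] .
          hence "inner k (c *s x) = 0" by (simp add: inner_ip ip_smult_right) }
        thus "c *s x \<in> ?W" unfolding orthc_def by blast
      qed
      have iW: "\<forall>x\<in>?W. A *v x \<in> ?W"
      proof
        fix x assume x: "x \<in> ?W"
        { fix k assume k: "k \<in> eigs A"
          then obtain c where c: "A *v k = c *s k" unfolding eigs_def by blast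
          have "ip k x = 0" using orth_cplx[OF x k eigs_ii[OF k]] .
          hence "ip k (A *v x) = 0" using psd_herm_ip[OF assms, of k x] c by (simp add: ip_smult_left)
          hence "inner k (A *v x) = 0" by (simp add: inner_ip) }
        thus "A *v x \<in> ?W" unfolding orthc_def by blast
      qed
      obtain l u where lu: "l \<noteq> 0" "u \<noteq> 0" "A *v u = l *s u" "u \<in> ?W"
        using eig_in_inv[OF assms cW iW zW Az] by blast
      have "u \<in> eigs A" using lu unfolding eigs_def by blast
      hence "inner u u = 0" using lu(4) unfolding orthc_def by blast
      thus ?thesis using lu(2) by simp
    qed
  qed
qed



lemma subspace_kerA: "subspace (kerA A)"
  unfolding subspace_def kerA_def
  by (auto simp: matrix_vector_right_distrib scaleR_smult mv_smult)

lemma orthc2: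
  assumes "subspace K"
  shows "orthc (orthc K) = K"
proof
  show "K \<subseteq> orthc (orthc K)" unfolding orthc_def by (auto simp: inner_commute)
  show "orthc (orthc K) \<subseteq> K"
  proof
    fix x assume x: "x \<in> orthc (orthc K)"
    obtain y z where yz: "y \<in> span K" "\<And>w. w \<in> span K \<Longrightarrow> orthogonal z w" "x = y + z"
      using orthogonal_subspace_decomp_exists[of K x] by blast
    have yK: "y \<in> K" using yz(1) assms span_eq_iff by blast
    have zo: "z \<in> orthc K" using yz(2) span_superset[of K] unfolding orthc_def orthogonal_def
      by (auto simp: inner_commute)
    have "inner z x = 0" using x zo unfolding orthc_def by blast
    moreover have "inner z y = 0" using zo yK unfolding orthc_def by (auto simp: inner_commute)
    ultimately have "inner z z = 0" using yz(3) by (simp add: inner_add_right)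
    hence "z = 0" by simp
    thus "x \<in> K" using yz(3) yK by simp
  qed
qed

lemma orthc_anti: "S \<subseteq> T \<Longrightarrow> orthc T \<subseteq> orthc S"
  unfolding orthc_def by blast

lemma kerA_supp: "psd A \<Longrightarrow> kerA A = orthc (supp A)"
  using supp_char orthc2[OF subspace_kerA] by metis

lemma supp_subset_iff: "psd A \<Longrightarrow> psd B \<Longrightarrow> supp A \<subseteq> supp B \<longleftrightarrow> kerA B \<subseteq> kerA A"
  by (metis kerA_supp orthc_anti supp_char)

lemma psd_add: "psd A \<Longrightarrow> psd B \<Longrightarrow> psd (A + B)"
  unfolding psd_def by (simp add: sesq_ip matrix_vector_mult_add_rdistrib ip_add_right)

lemma psd_zero: "psd 0"
  unfolding psd_def by (simp add: sesq_ip)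

lemma psd_sum: "(\<And>i. i \<in> I \<Longrightarrow> psd (X i)) \<Longrightarrow> psd (\<Sum>i\<in>I. X i)"
  by (induct I rule: infinite_finite_induct) (auto simp: psd_zero psd_add)

lemma psd_quad_eq: "psd A \<Longrightarrow> sesq v A v = of_real (Re (sesq v A v)) \<and> 0 \<le> Re (sesq v A v)"
  unfolding psd_def by (simp add: complex_eq_iff)

lemma kerA_add:
  assumes "psd A" "psd B"
  shows "kerA (A + B) = kerA A \<inter> kerA B"
proof
  show "kerA A \<inter> kerA B \<subseteq> kerA (A + B)" unfolding kerA_def by (auto simp: matrix_vector_mult_add_rdistrib)
  show "kerA (A + B) \<subseteq> kerA A \<inter> kerA B"
  proof
    fix v assume "v \<in> kerA (A + B)"
    hence "sesq v A v + sesq v B v = 0" unfolding kerA_def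
      by (simp add: sesq_ip matrix_vector_mult_add_rdistrib ip_add_right[symmetric])
    hence "Re (sesq v A v) + Re (sesq v B v) = 0" by (metis plus_complex.sel(1) zero_complex.sel(1))
    with psd_quad_eq[OF assms(1), of v] psd_quad_eq[OF assms(2), of v]
    have "sesq v A v = 0" "sesq v B v = 0" by (metis add_nonneg_eq_0_iff of_real_0)+
    thus "v \<in> kerA A \<inter> kerA B" using psd_zero_quad assms unfolding kerA_def by blast
  qed
qed

lemma supp_zero: "supp (0::'n::finite qop) = {0}"
proof -
  have "kerA (0::'n qop) = UNIV" unfolding kerA_def by simp
  hence "supp (0::'n qop) = orthc UNIV" using supp_char[of "0::'n qop"] psd_zero by simp
  also have "\<dots> = {0}" unfolding orthc_def by (auto dest: inner_eq_zero_iff[THEN iffD1])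
  finally show ?thesis .
qed

lemma supp_add:
  assumes "psd A" "psd B"
  shows "supp (A + B) = span (supp A \<union> supp B)"
proof
  have AB: "psd (A + B)" using assms by (rule psd_add)
  have sA: "supp A \<subseteq> supp (A + B)" using supp_subset_iff[OF assms(1) AB] kerA_add[OF assms] by blast
  have sB: "supp B \<subseteq> supp (A + B)" using supp_subset_iff[OF assms(2) AB] kerA_add[OF assms] by blast
  show "span (supp A \<union> supp B) \<subseteq> supp (A + B)"
    using sA sB csub_supp[of "A+B"] unfolding csub_def by (intro span_minimal) auto
  show "supp (A + B) \<subseteq> span (supp A \<union> supp B)"
  proof
    fix v assume v: "v \<in> supp (A + B)"
    let ?U = "supp A \<union> supp B"
    obtain y z where yz: "y \<in> span ?U" "\<And>w. w \<in> span ?U \<Longrightarrow> orthogonal z w" "v = y + z"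
      using orthogonal_subspace_decomp_exists[of ?U v] by blast
    have zU: "z \<in> orthc ?U" using yz(2) span_superset[of ?U] unfolding orthc_def orthogonal_def
      by (auto simp: inner_commute)
    have "z \<in> kerA A" using zU kerA_supp[OF assms(1)] orthc_anti[of "supp A" ?U] by blast
    moreover have "z \<in> kerA B" using zU kerA_supp[OF assms(2)] orthc_anti[of "supp B" ?U] by blast
    ultimately have zK: "z \<in> kerA (A + B)" using kerA_add[OF assms] by blast
    have "span ?U \<subseteq> supp (A + B)"
      using sA sB csub_supp[of "A+B"] unfolding csub_def by (intro span_minimal) auto
    hence "y \<in> supp (A + B)" using yz(1) by blast
    hence "z \<in> supp (A + B)" using v yz(3) csub_supp[of "A+B"] unfolding csub_def
      by (metis add_diff_cancel_left' subspace_diff)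
    hence "inner z z = 0" using zK supp_char[OF AB] unfolding orthc_def by blast
    hence "z = 0" by simp
    thus "v \<in> span ?U" using yz by simp
  qed
qed

lemma span_Un_span: "span (P \<union> span Q) = span (P \<union> Q)"
proof (rule antisym)
  have "P \<union> span Q \<subseteq> span (P \<union> Q)" using span_superset[of "P \<union> Q"] span_mono[of Q "P \<union> Q"] by blast
  thus "span (P \<union> span Q) \<subseteq> span (P \<union> Q)" by (rule span_minimal) simp
  show "span (P \<union> Q) \<subseteq> span (P \<union> span Q)" by (rule span_mono) (use span_superset in blast)
qed

lemma supp_sum:
  assumes "finite I" "\<And>i. i \<in> I \<Longrightarrow> psd (X i)"
  shows "supp (\<Sum>i\<in>I. X i) = span (\<Union>i\<in>I. supp (X i))"
  using assms
proof (induct I rule: finite_induct)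
  case empty thus ?case by (simp add: supp_zero)
next
  case (insert a I)
  have "supp (\<Sum>i\<in>insert a I. X i) = supp (X a + (\<Sum>i\<in>I. X i))" using insert by simp
  also have "\<dots> = span (supp (X a) \<union> supp (\<Sum>i\<in>I. X i))"
    using insert by (intro supp_add psd_sum) auto
  also have "\<dots> = span (supp (X a) \<union> span (\<Union>i\<in>I. supp (X i)))" using insert by simp
  also have "\<dots> = span (\<Union>i\<in>insert a I. supp (X i))"
    by (simp add: span_Un_span)
  finally show ?case .
qed



lemma smul_op_mv: "smul_op c A *v v = c *s (A *v v)"
  unfolding smul_op_def by (simp add: matrix_vector_mult_def vec_eq_iff sum_distrib_left mult.assoc)

lemma sesq_smul_op: "sesq v (smul_op c A) v = c * sesq v A v"
  by (simp add: sesq_ip smul_op_mv ip_smult_right)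

lemma sesq_addop: "sesq v (A + B) v = sesq v A v + sesq v B v"
  by (simp add: sesq_ip matrix_vector_mult_add_rdistrib ip_add_right)

lemma sesq_scaleR_quad: "sesq (r *\<^sub>R w) A (r *\<^sub>R w) = of_real (r^2) * sesq w A w"
  by (simp add: scaleR_smult sesq_smult_left sesq_smult_right power2_eq_square)

lemma sesq_ker_split:
  assumes "psd A" "A *v y = 0"
  shows "sesq (y + z) A (y + z) = sesq z A z"
proof -
  have "sesq z A y = 0" using assms(2) by (simp add: sesq_ip)
  moreover have "sesq y A z = 0" using psd_herm[OF assms(1), of z y] calculation by simp
  moreover have "sesq y A y = 0" using assms(2) by (simp add: sesq_ip)
  ultimately show ?thesis by (simp add: sesq_add_left sesq_add_right)
qed

lemma continuous_quad: "continuous_on S (\<lambda>w. Re (sesq w A w))"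
  unfolding sesq_def by (intro continuous_intros)

lemma dominate:
  assumes X: "psd X" and Y: "psd Y" and K: "kerA Y \<subseteq> kerA X"
  shows "\<exists>c\<ge>0. \<forall>v. Re (sesq v X v) \<le> c * Re (sesq v Y v)"
proof -
  let ?K = "kerA Y"
  let ?O = "orthc ?K"
  let ?P = "?O \<inter> sphere 0 1"
  let ?f = "\<lambda>w. Re (sesq w Y w)"
  let ?g = "\<lambda>w. Re (sesq w X w)"
  have fpos: "\<And>w. 0 \<le> ?f w" and gpos: "\<And>w. 0 \<le> ?g w" using X Y unfolding psd_def by auto
  have sub: "subspace ?O" by (rule subspace_orthc)
  have onO: "\<exists>c\<ge>0. \<forall>w\<in>?O. ?g w \<le> c * ?f w"
  proof (cases "?P = {}")
    case True
    have "w = 0" if "w \<in> ?O" for w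
    proof (rule ccontr)
      assume "w \<noteq> 0"
      hence "(1 / norm w) *\<^sub>R w \<in> ?P" using that sub by (simp add: subspace_scale)
      thus False using True by blast
    qed
    hence "\<forall>w\<in>?O. ?g w \<le> 0 * ?f w" by (metis mult_zero_left order_refl sesq_ip ip_zero_left zero_complex.sel(1))
    thus ?thesis by blast
  next
    case False
    have "compact (sphere 0 1 \<inter> ?O)"
      by (rule compact_Int_closed[OF compact_sphere closed_subspace[OF sub]])
    hence cP: "compact ?P" by (simp add: Int_commute)
    obtain w0 where w0: "w0 \<in> ?P" "\<And>y. y \<in> ?P \<Longrightarrow> ?f w0 \<le> ?f y"
      using continuous_attains_inf[OF cP False continuous_quad] by blast
    obtain w1 where w1: "w1 \<in> ?P" "\<And>y. y \<in> ?P \<Longrightarrow> ?g y \<le> ?g w1"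
      using continuous_attains_sup[OF cP False continuous_quad] by blast
    define m where "m = ?f w0"
    define M where "M = ?g w1"
    have m0: "m > 0"
    proof -
      have "m \<noteq> 0"
      proof
        assume "m = 0"
        hence "sesq w0 Y w0 = 0" using psd_quad_eq[OF Y, of w0] unfolding m_def by simp
        hence "w0 \<in> ?K" using psd_zero_quad[OF Y] unfolding kerA_def by blast
        hence "inner w0 w0 = 0" using w0(1) unfolding orthc_def by blast
        thus False using w0(1) by simp
      qed
      thus ?thesis using fpos[of w0] unfolding m_def by simp
    qed
    have M0: "M \<ge> 0" unfolding M_def by (rule gpos)
    have "\<forall>w\<in>?O. ?g w \<le> (M / m) * ?f w"
    proof
      fix w assume wO: "w \<in> ?O"
      show "?g w \<le> (M / m) * ?f w"
      proof (cases "w = 0")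
        case True thus ?thesis by (simp add: sesq_ip)
      next
        case False
        define n where "n = norm w"
        have n0: "n > 0" using False unfolding n_def by simp
        define u where "u = (1 / n) *\<^sub>R w"
        have uP: "u \<in> ?P" using wO sub n0 unfolding u_def n_def by (simp add: subspace_scale)
        have wu: "w = n *\<^sub>R u" unfolding u_def using n0 by simp
        have fw: "?f w = n^2 * ?f u" unfolding wu sesq_scaleR_quad by simp
        have gw: "?g w = n^2 * ?g u" unfolding wu sesq_scaleR_quad by simp
        have "?g u \<le> M" using w1(2)[OF uP] unfolding M_def .
        also have "M = (M / m) * m" using m0 by simp
        also have "\<dots> \<le> (M / m) * ?f u" using w0(2)[OF uP] m0 M0 unfolding m_def
          by (intro mult_left_mono) auto
        finally have "?g u \<le> (M / m) * ?f u" .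
        hence "n^2 * ?g u \<le> n^2 * ((M / m) * ?f u)" by (intro mult_left_mono) auto
        thus ?thesis using fw gw by (simp add: algebra_simps)
      qed
    qed
    moreover have "M / m \<ge> 0" using m0 M0 by simp
    ultimately show ?thesis by blast
  qed
  then obtain c where c: "c \<ge> 0" "\<forall>w\<in>?O. ?g w \<le> c * ?f w" by blast
  have "?g v \<le> c * ?f v" for v
  proof -
    obtain y z where yz: "y \<in> span ?K" "\<And>w. w \<in> span ?K \<Longrightarrow> orthogonal z w" "v = y + z"
      using orthogonal_subspace_decomp_exists[of ?K v] by blast
    have yK: "y \<in> ?K" using yz(1) subspace_kerA span_eq_iff by blast
    have zO: "z \<in> ?O" using yz(2) span_superset[of ?K] unfolding orthc_def orthogonal_def
      by (auto simp: inner_commute)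
    have "sesq v Y v = sesq z Y z" unfolding yz(3) using yK by (intro sesq_ker_split Y) (simp add: kerA_def)
    moreover have "sesq v X v = sesq z X z" unfolding yz(3) using yK K by (intro sesq_ker_split X) (auto simp: kerA_def)
    ultimately show ?thesis using c(2) zO by simp
  qed
  thus ?thesis using c(1) by blast
qed

definition posmap :: "('n::finite qop \<Rightarrow> 'n qop) \<Rightarrow> bool" where
  "posmap \<Phi> \<longleftrightarrow> (\<forall>A B. \<Phi> (A + B) = \<Phi> A + \<Phi> B) \<and> (\<forall>c A. \<Phi> (smul_op c A) = smul_op c (\<Phi> A))
     \<and> (\<forall>A. psd A \<longrightarrow> psd (\<Phi> A))"

lemma posmap_mono:
  assumes P: "posmap \<Phi>" and X: "psd X" and Y: "psd Y" and S: "supp X \<subseteq> supp Y"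
  shows "supp (\<Phi> X) \<subseteq> supp (\<Phi> Y)"
proof -
  have K: "kerA Y \<subseteq> kerA X" using supp_subset_iff[OF X Y] S by blast
  obtain c where c: "c \<ge> 0" "\<And>v. Re (sesq v X v) \<le> c * Re (sesq v Y v)" using dominate[OF X Y K] by blast
  define Z where "Z = smul_op (of_real c) Y + smul_op (-1) X"
  have sZ: "sesq v Z v = of_real c * sesq v Y v - sesq v X v" for v
    unfolding Z_def sesq_addop sesq_smul_op by simp
  have "psd Z"
    unfolding psd_def
  proof
    fix v
    show "Im (sesq v Z v) = 0 \<and> 0 \<le> Re (sesq v Z v)"
      using sZ[of v] c(2)[of v] X Y unfolding psd_def by auto
  qed
  hence pZ: "psd (\<Phi> Z)" using P unfolding posmap_def by blast
  have PZ: "\<Phi> Z = smul_op (of_real c) (\<Phi> Y) + smul_op (-1) (\<Phi> X)"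
    using P unfolding posmap_def Z_def by simp
  have PX: "psd (\<Phi> X)" and PY: "psd (\<Phi> Y)" using P X Y unfolding posmap_def by auto
  have "kerA (\<Phi> Y) \<subseteq> kerA (\<Phi> X)"
  proof
    fix v assume "v \<in> kerA (\<Phi> Y)"
    hence y0: "sesq v (\<Phi> Y) v = 0" unfolding kerA_def by (simp add: sesq_ip)
    have "0 \<le> Re (sesq v (\<Phi> Z) v)" using pZ unfolding psd_def by auto
    also have "Re (sesq v (\<Phi> Z) v) = - Re (sesq v (\<Phi> X) v)"
      unfolding PZ sesq_addop sesq_smul_op y0 by simp
    finally have "Re (sesq v (\<Phi> X) v) = 0" using PX unfolding psd_def by (metis neg_0_le_iff_le order.antisym)
    hence "sesq v (\<Phi> X) v = 0" using psd_quad_eq[OF PX, of v] by simp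
    thus "v \<in> kerA (\<Phi> X)" using psd_zero_quad[OF PX] unfolding kerA_def by blast
  qed
  thus ?thesis using supp_subset_iff[OF PX PY] by blast
qed



lemma csub_zero: "csub {0::complex^'n::finite}"
  unfolding csub_def by (simp add: subspace_def)

lemma dim_step:
  assumes U: "csub U" and U': "csub (U'::(complex^'n::finite) set)" and sub: "U \<subseteq> U'" and ne: "U \<noteq> U'"
  shows "dim U + 2 \<le> dim U'"
proof -
  have sU: "subspace U" and sU': "subspace U'" using U U' unfolding csub_def by auto
  obtain v where v: "v \<in> U'" "v \<notin> U" using sub ne by blast
  have spU: "span U = U" using sU span_eq_iff by blast
  have vs: "v \<notin> span U" using v spU by blast
  have d1: "dim (insert v U) = dim U + 1" using vs by (simp add: dim_insert)
  have iv: "\<i> *s v \<notin> span (insert v U)"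
  proof
    assume "\<i> *s v \<in> span (insert v U)"
    then obtain k where k: "\<i> *s v - k *\<^sub>R v \<in> span U" unfolding span_insert by blast
    hence k': "(\<i> - of_real k) *s v \<in> U" using spU by (simp add: scaleR_smult vector_sub_rdistrib)
    have nz: "\<i> - of_real k \<noteq> 0" by (simp add: complex_eq_iff)
    have "(1 / (\<i> - of_real k)) *s ((\<i> - of_real k) *s v) \<in> U" using U k' unfolding csub_def by blast
    moreover have "(1 / (\<i> - of_real k)) *s ((\<i> - of_real k) *s v) = v"
      apply (simp only: vector_smult_assoc) using nz by simp
    ultimately have "v \<in> U" by simp
    thus False using v by blast
  qed
  have "dim (insert (\<i> *s v) (insert v U)) = dim U + 2" using iv d1 by (simp add: dim_insert)
  moreover have "insert (\<i> *s v) (insert v U) \<subseteq> U'" using v sub U' unfolding csub_def by blast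
  ultimately show ?thesis using dim_subset by metis
qed

lemma dim_le_DIM: "dim (S::(complex^'n::finite) set) \<le> 2 * CARD('n)"
  using dim_subset_UNIV[of S] by simp

locale seqS =
  fixes S :: "nat \<Rightarrow> (complex^'n::finite) set"
  assumes cs: "\<And>i. csub (S i)"
    and F1: "\<And>I j. finite I \<Longrightarrow> S j \<subseteq> span (\<Union>i\<in>I. S i) \<Longrightarrow> S (Suc j) \<subseteq> span (\<Union>i\<in>I. S (Suc i))"
begin

definition G :: "nat \<Rightarrow> nat \<Rightarrow> (complex^'n) set" where
  "G a k = span (\<Union>i\<in>{a..a+k}. S i)"

definition V :: "nat \<Rightarrow> (complex^'n) set" where
  "V a = span (\<Union>i\<in>{a..}. S i)"

lemma csub_span_U: "csub (span (\<Union>i\<in>I. S i))"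
proof (rule csub_span)
  fix c v assume "v \<in> (\<Union>i\<in>I. S i)"
  then obtain i where i: "i \<in> I" "v \<in> S i" by blast
  hence "c *s v \<in> S i" using cs[of i] unfolding csub_def by blast
  hence "c *s v \<in> (\<Union>i\<in>I. S i)" using i by blast
  thus "c *s v \<in> span (\<Union>i\<in>I. S i)" by (rule span_base)
qed

lemma G_mono: "k \<le> k' \<Longrightarrow> G a k \<subseteq> G a k'"
  unfolding G_def by (intro span_mono UN_mono) auto

lemma S_G: "a \<le> j \<Longrightarrow> j \<le> a + k \<Longrightarrow> S j \<subseteq> G a k"
  unfolding G_def by (rule order.trans[OF _ span_superset]) auto

lemma UN_Suc_sub: "(\<And>i. i \<in> A \<Longrightarrow> Suc i \<in> B) \<Longrightarrow> (\<Union>i\<in>A. S (Suc i)) \<subseteq> (\<Union>i\<in>B. S i)"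
  by blast

lemma S_V: "n \<le> j \<Longrightarrow> S j \<subseteq> V n"
  unfolding V_def by (rule order.trans[OF _ span_superset]) auto

lemma stab:
  assumes "G a (Suc k) \<subseteq> G a k"
  shows "a \<le> j \<Longrightarrow> S j \<subseteq> G a k"
proof (induct j)
  case 0 thus ?case using S_G by simp
next
  case (Suc j)
  show ?case
  proof (cases "Suc j \<le> a + k")
    case True thus ?thesis using S_G Suc by simp
  next
    case False
    hence "a \<le> j" using Suc by simp
    hence "S j \<subseteq> span (\<Union>i\<in>{a..a+k}. S i)" using Suc unfolding G_def by blast
    hence "S (Suc j) \<subseteq> span (\<Union>i\<in>{a..a+k}. S (Suc i))" by (intro F1) auto
    also have "\<dots> \<subseteq> G a (Suc k)" unfolding G_def by (intro span_mono UN_Suc_sub) auto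
    finally show ?thesis using assms by blast
  qed
qed

lemma zero_prop:
  assumes "S a \<subseteq> span {}"
  shows "a \<le> j \<Longrightarrow> S j \<subseteq> span {}"
proof (induct j)
  case 0 thus ?case using assms by simp
next
  case (Suc j)
  show ?case
  proof (cases "a = Suc j")
    case True thus ?thesis using assms by simp
  next
    case False
    hence "S j \<subseteq> span (\<Union>i\<in>{}. S i)" using Suc by simp
    hence "S (Suc j) \<subseteq> span (\<Union>i\<in>{}. S (Suc i))" by (intro F1) auto
    thus ?thesis by simp
  qed
qed

lemma final:
  assumes d: "1 \<le> CARD('n)" and j: "a \<le> j"
  shows "S j \<subseteq> G a (CARD('n) - 1)"
proof (cases "\<exists>k<CARD('n) - 1. G a (Suc k) \<subseteq> G a k")
  case True
  then obtain k where k: "k < CARD('n) - 1" "G a (Suc k) \<subseteq> G a k" by blast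
  show ?thesis using stab[OF k(2) j] G_mono[of k "CARD('n) - 1" a] k(1) by simp
next
  case nk: False
  show ?thesis
  proof (cases "G a 0 = {0}")
    case True
    hence "S a \<subseteq> span {}" using S_G[of a a 0] by simp
    hence "S j \<subseteq> span {}" using zero_prop j by blast
    moreover have "span {} \<subseteq> G a (CARD('n) - 1)" unfolding G_def by (rule span_mono) simp
    ultimately show ?thesis by blast
  next
    case G0: False
    have "k \<le> CARD('n) - 1 \<Longrightarrow> 2 * (k + 1) \<le> dim (G a k)" for k
    proof (induct k)
      case 0
      have "0 \<in> G a 0" unfolding G_def by (rule span_zero)
      hence "{0} \<subseteq> G a 0" "{0} \<noteq> G a 0" using G0 by auto
      hence "dim {0::complex^'n} + 2 \<le> dim (G a 0)" using dim_step[OF csub_zero] csub_span_U unfolding G_def by metis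
      thus ?case by simp
    next
      case (Suc k)
      have "k < CARD('n) - 1" using Suc(2) by simp
      hence "\<not> G a (Suc k) \<subseteq> G a k" using nk by blast
      hence ne: "G a k \<noteq> G a (Suc k)" by auto
      have "dim (G a k) + 2 \<le> dim (G a (Suc k))"
        using dim_step[OF _ _ G_mono[of k "Suc k" a] ne] csub_span_U unfolding G_def by simp
      thus ?case using Suc by simp
    qed
    hence "2 * CARD('n) \<le> dim (G a (CARD('n) - 1))" using d by (metis le_refl le_add_diff_inverse2)
    hence "dim (G a (CARD('n) - 1)) = DIM(complex^'n)" using dim_le_DIM[of "G a (CARD('n) - 1)"] by simp
    hence "span (G a (CARD('n) - 1)) = UNIV" using dim_eq_full by blast
    hence "G a (CARD('n) - 1) = UNIV" unfolding G_def by (simp only: span_span)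
    thus ?thesis by simp
  qed
qed

lemma V_eq_G: "1 \<le> CARD('n) \<Longrightarrow> V a = G a (CARD('n) - 1)"
proof
  assume d: "1 \<le> CARD('n)"
  show "V a \<subseteq> G a (CARD('n) - 1)" unfolding V_def
    by (rule span_minimal) (use final[OF d] in \<open>auto simp: G_def\<close>)
  show "G a (CARD('n) - 1) \<subseteq> V a" unfolding V_def G_def by (rule span_mono) auto
qed

lemma V_anti: "a \<le> b \<Longrightarrow> V b \<subseteq> V a"
  unfolding V_def by (intro span_mono UN_mono) auto

lemma V_same: "S n \<subseteq> V (Suc n) \<Longrightarrow> V n = V (Suc n)"
proof
  assume h: "S n \<subseteq> V (Suc n)"
  show "V n \<subseteq> V (Suc n)" unfolding V_def
  proof (rule span_minimal)
    show "(\<Union>i\<in>{n..}. S i) \<subseteq> span (\<Union>i\<in>{Suc n..}. S i)"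
    proof
      fix x assume "x \<in> (\<Union>i\<in>{n..}. S i)"
      then obtain i where i: "i \<ge> n" "x \<in> S i" by blast
      show "x \<in> span (\<Union>i\<in>{Suc n..}. S i)"
      proof (cases "i = n")
        case True thus ?thesis using h i unfolding V_def by blast
      next
        case False thus ?thesis using i by (intro span_base) auto
      qed
    qed
  qed simp
  show "V (Suc n) \<subseteq> V n" by (rule V_anti) simp
qed

lemma V_stab1:
  assumes d: "1 \<le> CARD('n)" and h: "S n \<subseteq> V (Suc n)"
  shows "S (Suc n) \<subseteq> V (Suc (Suc n))"
proof -
  have "S n \<subseteq> span (\<Union>i\<in>{Suc n..Suc n + (CARD('n) - 1)}. S i)"
    using h V_eq_G[OF d] unfolding G_def by blast
  hence "S (Suc n) \<subseteq> span (\<Union>i\<in>{Suc n..Suc n + (CARD('n) - 1)}. S (Suc i))" by (intro F1) auto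
  also have "\<dots> \<subseteq> V (Suc (Suc n))" unfolding V_def by (intro span_mono UN_Suc_sub) auto
  finally show ?thesis .
qed

lemma V_stab:
  assumes d: "1 \<le> CARD('n)" and h: "S n \<subseteq> V (Suc n)"
  shows "V (n + t) = V n"
proof -
  have "S (n + t) \<subseteq> V (Suc (n + t))" for t
    by (induct t) (use h V_stab1[OF d] in auto)
  hence "V (n + t) = V (Suc (n + t))" for t using V_same by blast
  thus ?thesis by (induct t) auto
qed

lemma V_d:
  assumes d: "1 \<le> CARD('n)"
  shows "V (CARD('n) + t) = V (CARD('n))"
proof (cases "\<exists>n<CARD('n). S n \<subseteq> V (Suc n)")
  case True
  then obtain n where n: "n < CARD('n)" "S n \<subseteq> V (Suc n)" by blast
  have "V (n + (CARD('n) - n + t)) = V n" "V (n + (CARD('n) - n)) = V n" using V_stab[OF d n(2)] by blast+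
  thus ?thesis using n(1) by simp
next
  case False
  have csV: "csub (V a)" for a unfolding V_def by (rule csub_span_U)
  have "n \<le> CARD('n) \<Longrightarrow> dim (V n) + 2 * n \<le> 2 * CARD('n)" for n
  proof (induct n)
    case 0 thus ?case using dim_le_DIM by simp
  next
    case (Suc n)
    have "\<not> S n \<subseteq> V (Suc n)" using False Suc(2) by simp
    hence "V (Suc n) \<noteq> V n" using S_V[of n n] by auto
    hence "dim (V (Suc n)) + 2 \<le> dim (V n)" using dim_step[OF csV csV V_anti[of n "Suc n"]] by simp
    thus ?case using Suc by simp
  qed
  hence "dim (V (CARD('n))) = 0" by (metis add_le_same_cancel2 le_refl le_zero_eq)
  hence V0: "V (CARD('n)) \<subseteq> {0}" by simp
  have "V (CARD('n) + t) \<subseteq> V (CARD('n))" by (rule V_anti) simp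
  moreover have "0 \<in> V (CARD('n) + t)" unfolding V_def by (rule span_zero)
  ultimately show ?thesis using V0 by blast
qed

lemma Inter_V:
  assumes d: "1 \<le> CARD('n)"
  shows "(\<Inter>n. V n) = G (CARD('n)) (CARD('n) - 1)"
proof -
  have "(\<Inter>n. V n) = V (CARD('n))"
  proof
    show "(\<Inter>n. V n) \<subseteq> V (CARD('n))" by blast
    show "V (CARD('n)) \<subseteq> (\<Inter>n. V n)"
    proof
      fix x assume x: "x \<in> V (CARD('n))"
      { fix n
        have "x \<in> V n"
        proof (cases "n \<le> CARD('n)")
          case True thus ?thesis using x V_anti by blast
        next
          case False
          hence "V n = V (CARD('n))" using V_d[OF d, of "n - CARD('n)"] by simp
          thus ?thesis using x by simp
        qed }
      thus "x \<in> (\<Inter>n. V n)" by blast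
    qed
  qed
  thus ?thesis using V_eq_G[OF d] by simp
qed

end



lemma ip_adj: "ip u (M *v x) = ip (adj M *v u) x"
proof -
  have "ip u (M *v x) = (\<Sum>i\<in>UNIV. \<Sum>j\<in>UNIV. cnj (u $ i) * M $ i $ j * x $ j)"
    unfolding ip_def matrix_vector_mult_def by (simp add: sum_distrib_left mult.assoc)
  also have "\<dots> = (\<Sum>j\<in>UNIV. \<Sum>i\<in>UNIV. cnj (u $ i) * M $ i $ j * x $ j)"
    by (rule sum.swap)
  also have "\<dots> = ip (adj M *v u) x"
    unfolding ip_def matrix_vector_mult_def adj_def by (simp add: sum_distrib_right sum_distrib_left mult_ac)
  finally show ?thesis .
qed

lemma matrix_add_rdistrib': "((A + B) ** C) = (A ** C) + (B ** (C::complex^'n::finite^'n))"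
  by (simp add: vec_eq_iff matrix_matrix_mult_def distrib_right sum.distrib)

lemma smul_op_add: "smul_op c (A + B) = smul_op c A + smul_op c (B::'n::finite qop)"
  by (simp add: vec_eq_iff smul_op_def distrib_left)

lemma smul_op_conj: "M ** smul_op c A ** N = smul_op c (M ** A ** (N::'n::finite qop))"
  by (simp add: vec_eq_iff matrix_matrix_mult_def smul_op_def sum_distrib_left sum_distrib_right mult_ac)

lemma posmap_conj:
  fixes M :: "'n::finite qop"
  shows "posmap (\<lambda>\<rho>. M ** \<rho> ** adj M)"
  unfolding posmap_def
proof (intro conjI allI impI)
  fix A B :: "'n qop"
  show "M ** (A + B) ** adj M = M ** A ** adj M + M ** B ** adj M"
    by (simp add: matrix_add_ldistrib matrix_add_rdistrib')
next
  fix c and A :: "'n qop"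
  show "M ** smul_op c A ** adj M = smul_op c (M ** A ** adj M)" by (rule smul_op_conj)
next
  fix A :: "'n qop" assume A: "psd A"
  have "sesq v (M ** A ** adj M) v = sesq (adj M *v v) A (adj M *v v)" for v
    by (simp add: sesq_ip matrix_vector_mul_assoc[symmetric] ip_adj)
  thus "psd (M ** A ** adj M)" using A unfolding psd_def by simp
qed

lemma block_psd_1: "block_psd 1 X \<longleftrightarrow> psd (X 0 0)"
  unfolding block_psd_def psd_def
proof (intro iffI allI)
  fix v assume "\<forall>v :: nat \<Rightarrow> complex^'a. Im (\<Sum>i<1. \<Sum>j<1. sesq (v i) (X i j) (v j)) = 0 \<and>
            0 \<le> Re (\<Sum>i<1. \<Sum>j<1. sesq (v i) (X i j) (v j))"
  from spec[OF this, of "\<lambda>_. v"] show "Im (sesq v (X 0 0) v) = 0 \<and> 0 \<le> Re (sesq v (X 0 0) v)" by simp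
next
  fix v :: "nat \<Rightarrow> complex^'a" assume "\<forall>v. Im (sesq v (X 0 0) v) = 0 \<and> 0 \<le> Re (sesq v (X 0 0) v)"
  thus "Im (\<Sum>i<1. \<Sum>j<1. sesq (v i) (X i j) (v j)) = 0 \<and> 0 \<le> Re (\<Sum>i<1. \<Sum>j<1. sesq (v i) (X i j) (v j))"
    by simp
qed

lemma posmap_super:
  fixes \<Phi> :: "'n::finite qop \<Rightarrow> 'n qop"
  shows "super_operator \<Phi> \<Longrightarrow> posmap \<Phi>"
  unfolding super_operator_def posmap_def clinear_op_def completely_positive_def
proof (intro conjI allI impI; (elim conjE)?)
  fix A :: "'n qop" assume cp: "\<forall>m X. block_psd m X \<longrightarrow> block_psd m (\<lambda>i j. \<Phi> (X i j))" and A: "psd A"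
  have "block_psd 1 (\<lambda>i j. A)" using A block_psd_1[of "\<lambda>i j. A"] by simp
  hence "block_psd 1 (\<lambda>i j. \<Phi> A)" using cp by blast
  thus "psd (\<Phi> A)" using block_psd_1[of "\<lambda>i j. \<Phi> A"] by simp
qed auto

lemma posmap_comp: "posmap \<Phi> \<Longrightarrow> posmap \<Psi> \<Longrightarrow> posmap (\<lambda>x. \<Phi> (\<Psi> x))"
  unfolding posmap_def by auto

lemma posmap_zero: "posmap \<Phi> \<Longrightarrow> \<Phi> 0 = 0"
  unfolding posmap_def by (metis add.right_neutral add_left_cancel)

lemma posmap_sum: "posmap \<Phi> \<Longrightarrow> \<Phi> (\<Sum>i\<in>I. X i) = (\<Sum>i\<in>I. \<Phi> (X i))"
  by (induct I rule: infinite_finite_induct) (auto simp: posmap_zero, auto simp: posmap_def)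

lemma smul_op_zero: "smul_op c (0::'n::finite qop) = 0"
  by (simp add: smul_op_def vec_eq_iff)

lemma smul_op_sum: "smul_op c (\<Sum>i\<in>I. X i) = (\<Sum>i\<in>I. smul_op c (X i :: 'n::finite qop))"
  by (induct I rule: infinite_finite_induct) (auto simp: smul_op_add smul_op_zero)

lemma posmap_sumfun: "(\<And>k. k \<in> K \<Longrightarrow> posmap (\<Phi> k)) \<Longrightarrow> posmap (\<lambda>x. \<Sum>k\<in>K. \<Phi> k x)"
  unfolding posmap_def
  by (auto simp: sum.distrib smul_op_sum intro!: psd_sum)

lemma posmap_pow: "posmap \<Phi> \<Longrightarrow> posmap (\<Phi> ^^ i)"
proof (induct i)
  case 0 thus ?case by (simp add: posmap_def)
next
  case (Suc i) thus ?case using posmap_comp[of \<Phi> "\<Phi>^^i"] by (simp add: comp_def)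
qed

context
  fixes m :: nat and E :: "nat \<Rightarrow> 'n::finite qop \<Rightarrow> 'n qop" and M1 :: "'n qop"
  assumes so: "\<And>k. k \<in> {1..m} \<Longrightarrow> super_operator (E k)"
begin

lemma posmap_Fk: "k \<in> {1..m} \<Longrightarrow> posmap (Fk E M1 k)"
proof -
  assume "k \<in> {1..m}"
  hence "posmap (\<lambda>\<rho>. E k (M1 ** \<rho> ** adj M1))"
    using posmap_comp[OF posmap_super[OF so] posmap_conj] by blast
  thus ?thesis unfolding Fk_def[abs_def] by simp
qed

lemma posmap_Fsum: "posmap (Fsum m E M1)"
proof -
  have "posmap (\<lambda>x. \<Sum>k\<in>{1..m}. Fk E M1 k x)" by (rule posmap_sumfun) (rule posmap_Fk)
  thus ?thesis unfolding Fsum_def[abs_def] by simp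
qed

definition L :: "nat \<Rightarrow> nat list set" where
  "L i = {f. set f \<subseteq> {1..m} \<and> length f = i}"

lemma L_iff: "f \<in> L i \<longleftrightarrow> set f \<subseteq> {1..m} \<and> length f = i"
  unfolding L_def by simp

lemma finite_L: "finite (L i)"
  unfolding L_def by (rule finite_lists_length_eq) simp

lemma Fstr_snoc: "Fstr E M1 (f @ [k]) \<rho> = Fk E M1 k (Fstr E M1 f \<rho>)"
  unfolding Fstr_def by simp

lemma psd_Fstr: "set f \<subseteq> {1..m} \<Longrightarrow> psd \<rho> \<Longrightarrow> psd (Fstr E M1 f \<rho>)"
proof (induct f arbitrary: \<rho>)
  case Nil thus ?case by (simp add: Fstr_def)
next
  case (Cons k f)
  have "psd (Fk E M1 k \<rho>)" using posmap_Fk[of k] Cons.prems unfolding posmap_def by auto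
  hence "psd (Fstr E M1 f (Fk E M1 k \<rho>))" using Cons by auto
  thus ?case by (simp add: Fstr_def)
qed

lemma L_Suc: "L (Suc i) = (\<lambda>(f, k). f @ [k]) ` (L i \<times> {1..m})"
proof
  show "(\<lambda>(f, k). f @ [k]) ` (L i \<times> {1..m}) \<subseteq> L (Suc i)" unfolding L_def by auto
  show "L (Suc i) \<subseteq> (\<lambda>(f, k). f @ [k]) ` (L i \<times> {1..m})"
  proof
    fix g assume g: "g \<in> L (Suc i)"
    hence "g \<noteq> []" unfolding L_def by auto
    hence "g = butlast g @ [last g]" by simp
    moreover have "butlast g \<in> L i" "last g \<in> {1..m}" using g \<open>g \<noteq> []\<close> unfolding L_def
      by (auto dest: in_set_butlastD simp: last_in_set subset_iff)
    ultimately show "g \<in> (\<lambda>(f, k). f @ [k]) ` (L i \<times> {1..m})"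
      by (metis (no_types, lifting) SigmaI case_prod_conv image_eqI)
  qed
qed

lemma inj_snoc: "inj_on (\<lambda>(f, k). f @ [k]) (A \<times> B)"
  unfolding inj_on_def by auto

lemma Fsum_pow_eq: "(Fsum m E M1 ^^ i) \<rho> = (\<Sum>f\<in>L i. Fstr E M1 f \<rho>)"
proof (induct i)
  case 0
  have "L 0 = {[]}" unfolding L_def by auto
  thus ?case by (simp add: Fstr_def)
next
  case (Suc i)
  have "(Fsum m E M1 ^^ Suc i) \<rho> = Fsum m E M1 (\<Sum>f\<in>L i. Fstr E M1 f \<rho>)"
    using Suc by simp
  also have "\<dots> = (\<Sum>k\<in>{1..m}. Fk E M1 k (\<Sum>f\<in>L i. Fstr E M1 f \<rho>))"
    by (rule Fsum_def)
  also have "\<dots> = (\<Sum>k\<in>{1..m}. \<Sum>f\<in>L i. Fstr E M1 (f @ [k]) \<rho>)"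
    by (intro sum.cong refl) (simp add: posmap_sum[OF posmap_Fk] Fstr_snoc)
  also have "\<dots> = (\<Sum>f\<in>L i. \<Sum>k\<in>{1..m}. Fstr E M1 (f @ [k]) \<rho>)" by (rule sum.swap)
  also have "\<dots> = (\<Sum>(f, k)\<in>L i \<times> {1..m}. Fstr E M1 (f @ [k]) \<rho>)"
    by (rule sum.cartesian_product)
  also have "\<dots> = (\<Sum>g\<in>L (Suc i). Fstr E M1 g \<rho>)"
    unfolding L_Suc by (subst sum.reindex[OF inj_snoc]) (simp add: case_prod_beta comp_def)
  finally show ?case .
qed

end



theorem mainTheorem3:
  fixes m :: nat and E :: "nat \<Rightarrow> 'n::finite qop \<Rightarrow> 'n qop"
    and M0 M1 \<rho>0 :: "'n qop"
  assumes "concurrent_program m E M0 M1"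
    and "density_op \<rho>0"
  shows "H_URR m E M1 \<rho>0 =
         supp (\<Sum>i\<in>{CARD('n)..2 * CARD('n) - 1}. (Fsum m E M1 ^^ i) \<rho>0)"
proof -
  have so: "\<And>k. k \<in> {1..m} \<Longrightarrow> super_operator (E k)"
    using assms(1) unfolding concurrent_program_def by blast
  have p0: "psd \<rho>0" using assms(2) unfolding density_op_def by blast
  define F where "F = Fsum m E M1"
  have PF: "posmap F" unfolding F_def by (rule posmap_Fsum[OF so])
  define \<rho> where "\<rho> i = (F ^^ i) \<rho>0" for i
  have prho: "psd (\<rho> i)" for i
    using posmap_pow[OF PF, of i] p0 unfolding \<rho>_def posmap_def by blast
  define S where "S i = supp (\<rho> i)" for i
  have rSuc: "\<rho> (Suc i) = F (\<rho> i)" for i unfolding \<rho>_def by simp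
  have spanS: "span (\<Union>i\<in>I. S i) = supp (\<Sum>i\<in>I. \<rho> i)" if "finite I" for I
    unfolding S_def using supp_sum[OF that prho] by simp
  interpret Q: seqS S
  proof
    fix i show "csub (S i)" unfolding S_def by (rule csub_supp)
  next
    fix I j assume I: "finite I" and h: "S j \<subseteq> span (\<Union>i\<in>I. S i)"
    have "supp (\<rho> j) \<subseteq> supp (\<Sum>i\<in>I. \<rho> i)" using h spanS[OF I] unfolding S_def by simp
    hence "supp (F (\<rho> j)) \<subseteq> supp (F (\<Sum>i\<in>I. \<rho> i))"
      by (rule posmap_mono[OF PF prho psd_sum[OF prho]])
    also have "F (\<Sum>i\<in>I. \<rho> i) = (\<Sum>i\<in>I. \<rho> (Suc i))" using posmap_sum[OF PF] rSuc by simp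
    also have "supp \<dots> = span (\<Union>i\<in>I. S (Suc i))"
      unfolding S_def using supp_sum[OF I prho] by simp
    finally show "S (Suc j) \<subseteq> span (\<Union>i\<in>I. S (Suc i))" unfolding S_def rSuc .
  qed
  have d: "1 \<le> CARD('n)" by (simp add: Suc_le_eq)
  \<comment> \<open>relate strings to S\<close>
  have SL: "S i = span (\<Union>f\<in>L m i. supp (Fstr E M1 f \<rho>0))" for i
  proof -
    have r: "\<rho> i = (\<Sum>f\<in>L m i. Fstr E M1 f \<rho>0)" unfolding \<rho>_def F_def by (rule Fsum_pow_eq[OF so])
    have ps: "psd (Fstr E M1 f \<rho>0)" if "f \<in> L m i" for f
      by (rule psd_Fstr[where m=m and E=E]) (use so that p0 L_iff[where m=m and E=E, OF so] in auto)
    show ?thesis unfolding S_def r by (rule supp_sum[OF finite_L[where m=m and E=E, OF so]]) (auto intro: ps)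
  qed
  have VB: "span (\<Union>{supp (Fstr E M1 f \<rho>0) | f. set f \<subseteq> {1..m} \<and> length f \<ge> n}) = Q.V n" for n
  proof
    show "span (\<Union>{supp (Fstr E M1 f \<rho>0) | f. set f \<subseteq> {1..m} \<and> length f \<ge> n}) \<subseteq> Q.V n"
    proof (rule span_minimal)
      show "subspace (Q.V n)" unfolding Q.V_def by simp
      show "\<Union>{supp (Fstr E M1 f \<rho>0) | f. set f \<subseteq> {1..m} \<and> length f \<ge> n} \<subseteq> Q.V n"
      proof
        fix x assume "x \<in> \<Union>{supp (Fstr E M1 f \<rho>0) | f. set f \<subseteq> {1..m} \<and> length f \<ge> n}"
        then obtain f where f: "set f \<subseteq> {1..m}" "length f \<ge> n" "x \<in> supp (Fstr E M1 f \<rho>0)" by blast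
        have "f \<in> L m (length f)" using L_iff[where m=m and E=E, OF so] f by simp
        hence "x \<in> (\<Union>f\<in>L m (length f). supp (Fstr E M1 f \<rho>0))" using f(3) by blast
        hence "x \<in> S (length f)" unfolding SL by (rule span_base)
        thus "x \<in> Q.V n" using Q.S_V[OF f(2)] by blast
      qed
    qed
    show "Q.V n \<subseteq> span (\<Union>{supp (Fstr E M1 f \<rho>0) | f. set f \<subseteq> {1..m} \<and> length f \<ge> n})"
      unfolding Q.V_def
    proof (rule span_minimal)
      show "(\<Union>i\<in>{n..}. S i) \<subseteq> span (\<Union>{supp (Fstr E M1 f \<rho>0) | f. set f \<subseteq> {1..m} \<and> length f \<ge> n})"
      proof
        fix x assume "x \<in> (\<Union>i\<in>{n..}. S i)"
        then obtain i where i: "i \<ge> n" "x \<in> S i" by blast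
        have "(\<Union>f\<in>L m i. supp (Fstr E M1 f \<rho>0)) \<subseteq> \<Union>{supp (Fstr E M1 f \<rho>0) | f. set f \<subseteq> {1..m} \<and> length f \<ge> n}"
        proof
          fix x assume "x \<in> (\<Union>f\<in>L m i. supp (Fstr E M1 f \<rho>0))"
          then obtain f where f: "f \<in> L m i" "x \<in> supp (Fstr E M1 f \<rho>0)" by blast
          have "set f \<subseteq> {1..m}" "length f = i" using f(1) L_iff[where m=m and E=E, OF so] by auto
          thus "x \<in> \<Union>{supp (Fstr E M1 f \<rho>0) | f. set f \<subseteq> {1..m} \<and> length f \<ge> n}"
            using f(2) i(1) by blast
        qed
        hence "S i \<subseteq> span (\<Union>{supp (Fstr E M1 f \<rho>0) | f. set f \<subseteq> {1..m} \<and> length f \<ge> n})"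
          unfolding SL by (rule span_mono)
        thus "x \<in> span (\<Union>{supp (Fstr E M1 f \<rho>0) | f. set f \<subseteq> {1..m} \<and> length f \<ge> n})" using i(2) by blast
      qed
    qed simp
  qed
  have "H_URR m E M1 \<rho>0 = (\<Inter>n. Q.V n)" unfolding H_URR_def VB ..
  also have "\<dots> = Q.G (CARD('n)) (CARD('n) - 1)" by (rule Q.Inter_V[OF d])
  also have "\<dots> = span (\<Union>i\<in>{CARD('n)..2 * CARD('n) - 1}. S i)"
  proof -
    have "CARD('n) + (CARD('n) - 1) = 2 * CARD('n) - 1" using d by simp
    thus ?thesis unfolding Q.G_def by (simp only:)
  qed
  also have "\<dots> = supp (\<Sum>i\<in>{CARD('n)..2 * CARD('n) - 1}. \<rho> i)" by (rule spanS) simp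
  finally show ?thesis unfolding \<rho>_def F_def .
qed


end
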